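(* Let $\omega\in I^{\mathbb N}$, $k\in\mathbb N$, $m_i=\#\{1\le j\le k:\omega_j=i\}$ for $i\in I$, $\vec m=(m_1,\dots,m_s)$, and $\vec 0\le\vec r\le\vec q$ in $\mathbb N_0^s$. Then $$A(\omega,k)_{\vec q,\vec r}=\sum_{\substack{\vec t\in\mathbb N_0^s:\ \vec q-\vec r-\vec m\le\vec t\le\vec q-\vec r\\ |\vec t|\le m_{s+1}}}(-1)^{|\vec t|}p_{s+1}^{-|\vec t|}\frac{m_{s+1}!}{(m_{s+1}-|\vec t|)!}\prod_{i=1}^s\frac{m_i!\,q_i!}{(m_i-(q_i-r_i-t_i))!\,(q_i-r_i-t_i)!\,t_i!\,r_i!\,p_i^{q_i-r_i-t_i}}.$$ Consequently there is $K\ge1$ depending on $\vec q$ and $\vec p$ but not on $k$ or $\omega$ with $|A(\omega,k)_{\vec q,\vec r}|\le K\big(\prod_{i=1}^s\tilde m_i^{q_i-r_i}\big)\tilde m_{s+1}^{|\vec q|-|\vec r|}$ and $|A(\omega,k)_{\vec q,\vec r}|\le Kk^{|\vec q|}$, where $\tilde m_j=\max\{1,m_j\}$. If $\omega_j\ne s+1$ for all $1\le j\le k$ and $m_i>q_i-r_i$ for all $i\le s$, then $A(\omega,k)_{\vec q,\vec r}\ge K'\prod_{i=1}^sm_i^{q_i-r_i}$ for a constant $K'>0$ depending only on $\vec q$.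
   Context: $s\ge1$, $I=\{1,\dots,s+1\}$, $\vec p=(p_1,\dots,p_s)\in(0,1)^s$ with $\sum p_i<1$, $p_{s+1}=1-\sum_{i\le s}p_i$. Matrices are indexed by $\mathbb N_0^s\times\mathbb N_0^s$ with the usual product; $\mathrm{Id}$ the identity; $1_{\vec n,\vec m}$ has a single entry $1$ at $(\vec n,\vec m)$; $\vec e_i$ the unit vectors; $D_i=\sum_{\vec n}n_i1_{\vec n,\vec n-\vec e_i}$. For $\omega\in I^{\mathbb N}$, $A_0(\omega,1)=p_{\omega_1}\mathrm{Id}+D_{\omega_1}$ if $\omega_1\le s$ and $A_0(\omega,1)=p_{s+1}\mathrm{Id}-\sum_{i\le s}D_i$ if $\omega_1=s+1$; $A_0(\omega,k)=A_0(\omega,1)A_0(\sigma\omega,1)\cdots A_0(\sigma^{k-1}\omega,1)$ with $\sigma$ the left shift; $A(\omega,k)=(p_{\omega_1}\cdots p_{\omega_k})^{-1}A_0(\omega,k)$. $\vec a\le\vec b$ is componentwise, $|\vec t|=\sum t_i$. *)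

theory Defs
  imports "HOL-Analysis.Analysis"
begin

text \<open>Multi-indices in N_0^s are functions nat => nat supported in {1..s}.
  Matrices indexed by N_0^s x N_0^s are functions of two multi-indices.\<close>

type_synonym mindex = "nat \<Rightarrow> nat"
type_synonym mat = "mindex \<Rightarrow> mindex \<Rightarrow> real"

definition Vec :: "nat \<Rightarrow> mindex set" where
  "Vec s = {n. \<forall>i. i \<notin> {1..s} \<longrightarrow> n i = 0}"

definition vle :: "nat \<Rightarrow> mindex \<Rightarrow> mindex \<Rightarrow> bool" where
  "vle s a b \<longleftrightarrow> (\<forall>i\<in>{1..s}. a i \<le> b i)"

definition vabs :: "nat \<Rightarrow> mindex \<Rightarrow> nat" where
  "vabs s t = (\<Sum>i=1..s. t i)"

definition unitv :: "nat \<Rightarrow> mindex" where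
  "unitv i = (\<lambda>j. if j = i then 1 else 0)"

definition Idm :: mat where
  "Idm n m = (if n = m then 1 else 0)"

definition Dm :: "nat \<Rightarrow> mat" where
  "Dm i n m = (if 1 \<le> n i \<and> m = n(i := n i - 1) then real (n i) else 0)"

definition mmult :: "nat \<Rightarrow> mat \<Rightarrow> mat \<Rightarrow> mat" where
  "mmult s A B n m = (\<Sum>\<^sub>\<infinity>l\<in>Vec s. A n l * B l m)"

text \<open>omega is indexed from 1: omega 1, omega 2, ...; the left shift.\<close>
definition shift :: "(nat \<Rightarrow> nat) \<Rightarrow> nat \<Rightarrow> nat" where
  "shift \<omega> = (\<lambda>j. \<omega> (j + 1))"

definition A01 :: "nat \<Rightarrow> (nat \<Rightarrow> real) \<Rightarrow> (nat \<Rightarrow> nat) \<Rightarrow> mat" where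
  "A01 s p \<omega> = (if \<omega> 1 \<le> s
      then (\<lambda>n m. p (\<omega> 1) * Idm n m + Dm (\<omega> 1) n m)
      else (\<lambda>n m. p (s + 1) * Idm n m - (\<Sum>i=1..s. Dm i n m)))"

fun A0 :: "nat \<Rightarrow> (nat \<Rightarrow> real) \<Rightarrow> (nat \<Rightarrow> nat) \<Rightarrow> nat \<Rightarrow> mat" where
  "A0 s p \<omega> 0 = Idm"
| "A0 s p \<omega> (Suc k) = mmult s (A01 s p \<omega>) (A0 s p (shift \<omega>) k)"

definition Am :: "nat \<Rightarrow> (nat \<Rightarrow> real) \<Rightarrow> (nat \<Rightarrow> nat) \<Rightarrow> nat \<Rightarrow> mat" where
  "Am s p \<omega> k n m = A0 s p \<omega> k n m / (\<Prod>j=1..k. p (\<omega> j))"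

definition valid_p :: "nat \<Rightarrow> (nat \<Rightarrow> real) \<Rightarrow> bool" where
  "valid_p s p \<longleftrightarrow> (\<forall>i\<in>{1..s}. 0 < p i \<and> p i < 1) \<and> (\<Sum>i=1..s. p i) < 1
      \<and> p (s + 1) = 1 - (\<Sum>i=1..s. p i)"

definition valid_omega :: "nat \<Rightarrow> (nat \<Rightarrow> nat) \<Rightarrow> bool" where
  "valid_omega s \<omega> \<longleftrightarrow> (\<forall>j\<ge>1. \<omega> j \<in> {1..s+1})"

definition cnt :: "(nat \<Rightarrow> nat) \<Rightarrow> nat \<Rightarrow> nat \<Rightarrow> nat" where
  "cnt \<omega> k i = card {j \<in> {1..k}. \<omega> j = i}"

definition Tset :: "nat \<Rightarrow> (nat \<Rightarrow> nat) \<Rightarrow> nat \<Rightarrow> mindex \<Rightarrow> mindex \<Rightarrow> mindex set" where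
  "Tset s \<omega> k q r = {t \<in> Vec s. (\<forall>i\<in>{1..s}.
        int (q i) - int (r i) - int (cnt \<omega> k i) \<le> int (t i) \<and> int (t i) \<le> int (q i) - int (r i))
      \<and> vabs s t \<le> cnt \<omega> k (s + 1)}"

definition Aformula :: "nat \<Rightarrow> (nat \<Rightarrow> real) \<Rightarrow> (nat \<Rightarrow> nat) \<Rightarrow> nat \<Rightarrow> mindex \<Rightarrow> mindex \<Rightarrow> real" where
  "Aformula s p \<omega> k q r =
    (\<Sum>t\<in>Tset s \<omega> k q r.
       (-1) ^ vabs s t * (1 / p (s + 1)) ^ vabs s t
       * fact (cnt \<omega> k (s + 1)) / fact (cnt \<omega> k (s + 1) - vabs s t)
       * (\<Prod>i=1..s.
           fact (cnt \<omega> k i) * fact (q i) /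
           (fact (cnt \<omega> k i - (q i - r i - t i)) * fact (q i - r i - t i) * fact (t i)
             * fact (r i) * p i ^ (q i - r i - t i))))"

end

theory Submission
  imports Defs
begin


lemma Vec_upd: "n \<in> Vec s \<Longrightarrow> j \<in> {1..s} \<Longrightarrow> n(j := x) \<in> Vec s"
  by (auto simp: Vec_def)

lemma mmult_fin:
  assumes "finite F" "F \<subseteq> Vec s" "\<And>l. l \<in> Vec s - F \<Longrightarrow> A n l = 0"
  shows "mmult s A B n m = (\<Sum>l\<in>F. A n l * B l m)"
proof -
  have "mmult s A B n m = infsum (\<lambda>l. A n l * B l m) F"
    unfolding mmult_def
    by (rule infsum_cong_neutral) (use assms in auto)
  thus ?thesis using assms(1) by simp
qed

lemma A01_low:
  assumes n: "n \<in> Vec s" and i: "\<omega> 1 \<in> {1..s}"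
  shows "mmult s (A01 s p \<omega>) B n m =
     p (\<omega> 1) * B n m + (if 1 \<le> n (\<omega> 1) then real (n (\<omega> 1)) * B (n(\<omega> 1 := n (\<omega> 1) - 1)) m else 0)"
proof -
  let ?i = "\<omega> 1"
  let ?F = "{n, n(?i := n ?i - 1)}"
  have F: "finite ?F" "?F \<subseteq> Vec s" using n i Vec_upd by auto
  have "mmult s (A01 s p \<omega>) B n m = (\<Sum>l\<in>?F. A01 s p \<omega> n l * B l m)"
    by (rule mmult_fin[OF F]) (use i in \<open>auto simp: A01_def Idm_def Dm_def\<close>)
  also have "\<dots> = (\<Sum>l\<in>?F. (if n = l then p ?i * B l m else 0)
      + (if l = n(?i := n ?i - 1) then (if 1 \<le> n ?i then real (n ?i) * B l m else 0) else 0))"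
    by (rule sum.cong) (use i in \<open>auto simp: A01_def Idm_def Dm_def algebra_simps\<close>)
  also have "\<dots> = p ?i * B n m + (if 1 \<le> n (\<omega> 1) then real (n (\<omega> 1)) * B (n(\<omega> 1 := n (\<omega> 1) - 1)) m else 0)"
    by (simp only: sum.distrib sum.delta sum.delta' F(1)) simp
  finally show ?thesis .
qed

lemma A01_high:
  assumes n: "n \<in> Vec s" and i: "\<omega> 1 = s + 1"
  shows "mmult s (A01 s p \<omega>) B n m =
     p (s+1) * B n m - (\<Sum>j=1..s. if 1 \<le> n j then real (n j) * B (n(j := n j - 1)) m else 0)"
proof -
  let ?F = "insert n ((\<lambda>j. n(j := n j - 1)) ` {1..s})"
  have F: "finite ?F" "?F \<subseteq> Vec s" using n Vec_upd by auto
  have "mmult s (A01 s p \<omega>) B n m = (\<Sum>l\<in>?F. A01 s p \<omega> n l * B l m)"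
    by (rule mmult_fin[OF F]) (use i in \<open>auto simp: A01_def Idm_def Dm_def intro!: sum.neutral\<close>)
  also have "\<dots> = (\<Sum>l\<in>?F. (if n = l then p (s+1) * B l m else 0)
      - (\<Sum>j=1..s. (if l = n(j := n j - 1) then (if 1 \<le> n j then real (n j) * B l m else 0) else 0)))"
  proof (rule sum.cong[OF refl])
    fix l
    have "A01 s p \<omega> n l = p (s+1) * Idm n l - (\<Sum>j=1..s. Dm j n l)"
      using i by (simp add: A01_def)
    hence "A01 s p \<omega> n l * B l m = p (s+1) * Idm n l * B l m - (\<Sum>j=1..s. Dm j n l * B l m)"
      by (simp add: left_diff_distrib sum_distrib_right)
    also have "\<dots> = (if n = l then p (s+1) * B l m else 0)
      - (\<Sum>j=1..s. (if l = n(j := n j - 1) then (if 1 \<le> n j then real (n j) * B l m else 0) else 0))"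
      by (intro arg_cong2[where f="(-)"] sum.cong) (auto simp: Idm_def Dm_def)
    finally show "A01 s p \<omega> n l * B l m = (if n = l then p (s+1) * B l m else 0)
      - (\<Sum>j=1..s. (if l = n(j := n j - 1) then (if 1 \<le> n j then real (n j) * B l m else 0) else 0))" .
  qed
  also have "\<dots> = p (s+1) * B n m - (\<Sum>j=1..s. if 1 \<le> n j then real (n j) * B (n(j := n j - 1)) m else 0)"
    apply (simp only: sum_subtractf sum.delta F(1))
    apply (subst sum.swap)
    apply (simp add: sum.delta F(1) del: One_nat_def)
    done
  finally show ?thesis .
qed


lemma p_pos: "valid_p s p \<Longrightarrow> i \<in> {1..s+1} \<Longrightarrow> p i > 0"
  by (cases "i = s+1") (auto simp: valid_p_def)

lemma valid_shift: "valid_omega s \<omega> \<Longrightarrow> valid_omega s (shift \<omega>)"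
  by (auto simp: valid_omega_def shift_def)

lemma prod_p_pos: "valid_p s p \<Longrightarrow> valid_omega s \<omega> \<Longrightarrow> (\<Prod>j=1..k. p (\<omega> j)) > 0"
  by (rule prod_pos) (auto simp: valid_omega_def intro!: p_pos)

lemma prod_Suc: "(\<Prod>j=1..Suc k. p (\<omega> j)) = p (\<omega> 1) * (\<Prod>j=1..k. p (shift \<omega> j))"
proof (induction k)
  case 0
  then show ?case by simp
next
  case (Suc k)
  have "(\<Prod>j=1..Suc (Suc k). p (\<omega> j)) = (\<Prod>j=1..Suc k. p (\<omega> j)) * p (\<omega> (Suc (Suc k)))"
    by (simp add: prod.nat_ivl_Suc' mult.commute)
  also have "\<dots> = p (\<omega> 1) * (\<Prod>j=1..k. p (shift \<omega> j)) * p (\<omega> (Suc (Suc k)))"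
    by (simp only: Suc.IH)
  also have "\<dots> = p (\<omega> 1) * ((\<Prod>j=1..k. p (shift \<omega> j)) * p (shift \<omega> (Suc k)))"
    by (simp add: shift_def mult.assoc)
  also have "\<dots> = p (\<omega> 1) * (\<Prod>j=1..Suc k. p (shift \<omega> j))"
    by (simp add: prod.nat_ivl_Suc' mult.commute)
  finally show ?case .
qed

lemma Am_Suc_low:
  assumes vp: "valid_p s p" and vo: "valid_omega s \<omega>" and n: "n \<in> Vec s" and i: "\<omega> 1 \<in> {1..s}"
  shows "Am s p \<omega> (Suc k) n m = Am s p (shift \<omega>) k n m
     + (if 1 \<le> n (\<omega> 1) then real (n (\<omega> 1)) / p (\<omega> 1) * Am s p (shift \<omega>) k (n(\<omega> 1 := n (\<omega> 1) - 1)) m else 0)"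
proof -
  define P where "P = (\<Prod>j=1..k. p (shift \<omega> j))"
  have P: "P > 0" unfolding P_def by (rule prod_p_pos[OF vp valid_shift[OF vo]])
  have pi: "p (\<omega> 1) > 0" using i by (intro p_pos[OF vp]) auto
  have A0: "A0 s p (shift \<omega>) k x m = Am s p (shift \<omega>) k x m * P" for x
    unfolding Am_def P_def[symmetric] using P by simp
  show ?thesis
    unfolding Am_def[of s p \<omega>] prod_Suc A0.simps A01_low[where \<omega>=\<omega>, OF n i] A0 P_def[symmetric]
    using P pi by (auto simp: field_simps)
qed

lemma Am_Suc_high:
  assumes vp: "valid_p s p" and vo: "valid_omega s \<omega>" and n: "n \<in> Vec s" and i: "\<omega> 1 = s + 1"
  shows "Am s p \<omega> (Suc k) n m = Am s p (shift \<omega>) k n m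
     - (1 / p (s+1)) * (\<Sum>j=1..s. if 1 \<le> n j then real (n j) * Am s p (shift \<omega>) k (n(j := n j - 1)) m else 0)"
proof -
  define P where "P = (\<Prod>j=1..k. p (shift \<omega> j))"
  have P: "P > 0" unfolding P_def by (rule prod_p_pos[OF vp valid_shift[OF vo]])
  have pi: "p (s+1) > 0" by (intro p_pos[OF vp]) auto
  have A0: "A0 s p (shift \<omega>) k x m = Am s p (shift \<omega>) k x m * P" for x
    unfolding Am_def P_def[symmetric] using P by simp
  have "(\<Sum>j=1..s. if 1 \<le> n j then real (n j) * (Am s p (shift \<omega>) k (n(j := n j - 1)) m * P) else 0)
     = (\<Sum>j=1..s. if 1 \<le> n j then real (n j) * Am s p (shift \<omega>) k (n(j := n j - 1)) m else 0) * P"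
    by (subst sum_distrib_right) (rule sum.cong; simp)
  then show ?thesis
    unfolding Am_def[of s p \<omega>] prod_Suc A0.simps A01_high[where \<omega>=\<omega>, OF n i] A0 P_def[symmetric] i
    using P pi by (auto simp: field_simps)
qed

lemma cnt_last: "cnt \<omega> (Suc k) i = cnt \<omega> k i + (if \<omega> (Suc k) = i then 1 else 0)"
proof -
  have "{j \<in> {1..Suc k}. \<omega> j = i} = {j \<in> {1..k}. \<omega> j = i} \<union> (if \<omega> (Suc k) = i then {Suc k} else {})"
    by (auto simp: le_Suc_eq)
  thus ?thesis unfolding cnt_def by auto
qed

lemma cnt_0: "cnt \<omega> 0 i = 0" by (simp add: cnt_def)

lemma cnt_Suc: "cnt \<omega> (Suc k) i = cnt (shift \<omega>) k i + (if \<omega> 1 = i then 1 else 0)"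
proof (induction k)
  case 0
  then show ?case by (simp add: cnt_last cnt_0)
next
  case (Suc k)
  then show ?case by (subst cnt_last) (simp add: cnt_last shift_def)
qed

lemma cnt_Suc': "cnt \<omega> (Suc k) = (cnt (shift \<omega>) k)(\<omega> 1 := cnt (shift \<omega>) k (\<omega> 1) + 1)"
  by (rule ext) (simp add: cnt_Suc)




definition bx :: "nat \<Rightarrow> mindex \<Rightarrow> mindex set" where
  "bx s d = {t \<in> Vec s. vle s t d}"

definition ff :: "nat \<Rightarrow> nat \<Rightarrow> real" where
  "ff n k = real (n choose k) * fact k"

definition Xp :: "nat \<Rightarrow> (nat \<Rightarrow> real) \<Rightarrow> (nat \<Rightarrow> nat) \<Rightarrow> mindex \<Rightarrow> mindex \<Rightarrow> real" where
  "Xp s p c d t = (\<Prod>i=1..s. real (c i choose (d i - t i)) * (1 / p i) ^ (d i - t i) / fact (t i))"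

definition gt :: "nat \<Rightarrow> (nat \<Rightarrow> real) \<Rightarrow> (nat \<Rightarrow> nat) \<Rightarrow> mindex \<Rightarrow> mindex \<Rightarrow> real" where
  "gt s p c d t = (-1) ^ vabs s t * (1 / p (s+1)) ^ vabs s t * ff (c (s+1)) (vabs s t) * Xp s p c d t"

definition fC :: "nat \<Rightarrow> (nat \<Rightarrow> real) \<Rightarrow> (nat \<Rightarrow> nat) \<Rightarrow> mindex \<Rightarrow> real" where
  "fC s p c d = (\<Sum>t\<in>bx s d. gt s p c d t)"

lemma finite_bx: "finite (bx s d)"
proof -
  have "bx s d \<subseteq> (\<lambda>f i. if i \<in> {1..s} then f i else 0) ` PiE {1..s} (\<lambda>i. {0..d i})"
  proof
    fix t assume t: "t \<in> bx s d"
    have "t = (\<lambda>i. if i \<in> {1..s} then restrict t {1..s} i else 0)"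
      using t by (auto simp: bx_def Vec_def)
    moreover have "restrict t {1..s} \<in> PiE {1..s} (\<lambda>i. {0..d i})"
      using t by (auto simp: bx_def vle_def)
    ultimately show "t \<in> (\<lambda>f i. if i \<in> {1..s} then f i else 0) ` PiE {1..s} (\<lambda>i. {0..d i})"
      by blast
  qed
  moreover have "finite (PiE {1..s} (\<lambda>i. {0..d i}))" by (rule finite_PiE) auto
  ultimately show ?thesis by (meson finite_imageI finite_subset)
qed

lemma ff_Suc: "ff (Suc n) (Suc k) = ff n (Suc k) + real (Suc k) * ff n k"
  unfolding ff_def by (simp add: algebra_simps)

lemma ff_0: "ff n 0 = 1" by (simp add: ff_def)

lemma prod_split: "(j::nat) \<in> {1..s} \<Longrightarrow> (\<Prod>i=1..s. f i) = f j * (\<Prod>i\<in>{1..s}-{j}. f i)"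
  by (rule prod.remove) auto

lemma sum_split: "(j::nat) \<in> {1..s} \<Longrightarrow> (\<Sum>i=1..s. f i) = f j + (\<Sum>i\<in>{1..s}-{j}. f i)"
  by (rule sum.remove) auto

lemma Xp_A:
  assumes j: "j \<in> {1..s}" and t: "t j \<le> d j"
  shows "Xp s p (c(j := c j + 1)) d t = Xp s p c d t +
     (if t j < d j then (1 / p j) * Xp s p c (d(j := d j - 1)) t else 0)"
proof -
  let ?R = "\<Prod>i\<in>{1..s}-{j}. real (c i choose (d i - t i)) * (1 / p i) ^ (d i - t i) / fact (t i)"
  have 1: "Xp s p (c(j := c j + 1)) d t = real ((c j + 1) choose (d j - t j)) * (1 / p j) ^ (d j - t j) / fact (t j) * ?R"
    unfolding Xp_def
    apply (subst prod_split[OF j])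
    apply (rule arg_cong2[where f="(*)"])
     apply simp
    apply (rule prod.cong)
     apply auto
    done
  have 2: "Xp s p c d t = real (c j choose (d j - t j)) * (1 / p j) ^ (d j - t j) / fact (t j) * ?R"
    unfolding Xp_def by (subst prod_split[OF j]) simp
  have 3: "Xp s p c (d(j := d j - 1)) t = real (c j choose (d j - 1 - t j)) * (1 / p j) ^ (d j - 1 - t j) / fact (t j) * ?R"
    unfolding Xp_def
    apply (subst prod_split[OF j])
    apply (rule arg_cong2[where f="(*)"])
     apply simp
    apply (rule prod.cong)
     apply auto
    done
  show ?thesis
  proof (cases "t j < d j")
    case True
    then obtain a where a: "d j - t j = Suc a" "d j - 1 - t j = a"
      by (metis Suc_diff_Suc diff_Suc_1 diff_commute Suc_pred' zero_less_diff)
    show ?thesis unfolding 1 2 3 using True a by (simp add: algebra_simps add_divide_distrib)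
  next
    case False
    then show ?thesis unfolding 1 2 using t by simp
  qed
qed


lemma bx_le: "t \<in> bx s d \<Longrightarrow> j \<in> {1..s} \<Longrightarrow> t j \<le> d j"
  by (auto simp: bx_def vle_def)

lemma gt_A:
  assumes j: "j \<in> {1..s}" and t: "t j \<le> d j"
  shows "gt s p (c(j := c j + 1)) d t = gt s p c d t +
     (if t j < d j then (1 / p j) * gt s p c (d(j := d j - 1)) t else 0)"
proof -
  have "(c(j := c j + 1)) (s+1) = c (s+1)" using j by auto
  then show ?thesis unfolding gt_def Xp_A[where t=t and d=d, OF j t]
    by (cases "t j < d j") (simp_all add: distrib_left)
qed

lemma bx_filter:
  assumes j: "j \<in> {1..s}" and dj: "1 \<le> d j"
  shows "{t \<in> bx s d. t j < d j} = bx s (d(j := d j - 1))"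
proof (intro set_eqI iffI)
  fix t assume "t \<in> {t \<in> bx s d. t j < d j}"
  hence t: "t \<in> Vec s" "\<forall>i\<in>{1..s}. t i \<le> d i" "t j < d j" by (auto simp: bx_def vle_def)
  have "\<forall>i\<in>{1..s}. t i \<le> (d(j := d j - 1)) i"
  proof
    fix i assume "i \<in> {1..s}"
    thus "t i \<le> (d(j := d j - 1)) i" using t by (cases "i = j") auto
  qed
  thus "t \<in> bx s (d(j := d j - 1))" using t(1) by (simp add: bx_def vle_def)
next
  fix t assume "t \<in> bx s (d(j := d j - 1))"
  hence t: "t \<in> Vec s" "\<forall>i\<in>{1..s}. t i \<le> (d(j := d j - 1)) i" by (auto simp: bx_def vle_def)
  have tj: "t j < d j" using t(2) j dj by fastforce
  have "\<forall>i\<in>{1..s}. t i \<le> d i"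
  proof
    fix i assume i: "i \<in> {1..s}"
    have "t i \<le> (d(j := d j - 1)) i" using t(2) i by blast
    thus "t i \<le> d i" using tj by (cases "i = j") auto
  qed
  thus "t \<in> {t \<in> bx s d. t j < d j}" using t(1) tj by (simp add: bx_def vle_def)
qed

lemma fC_A:
  assumes j: "j \<in> {1..s}"
  shows "fC s p (c(j := c j + 1)) d = fC s p c d +
     (if 1 \<le> d j then (1 / p j) * fC s p c (d(j := d j - 1)) else 0)"
proof -
  have "fC s p (c(j := c j + 1)) d = fC s p c d +
     (\<Sum>t\<in>bx s d. if t j < d j then (1 / p j) * gt s p c (d(j := d j - 1)) t else 0)"
    unfolding fC_def sum.distrib[symmetric]
    by (rule sum.cong[OF refl]) (rule gt_A[OF j bx_le[OF _ j]])
  also have "(\<Sum>t\<in>bx s d. if t j < d j then (1 / p j) * gt s p c (d(j := d j - 1)) t else 0)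
     = (\<Sum>t\<in>{t \<in> bx s d. t j < d j}. (1 / p j) * gt s p c (d(j := d j - 1)) t)"
    by (rule sum.inter_filter[symmetric, OF finite_bx])
  also have "\<dots> = (if 1 \<le> d j then (1 / p j) * fC s p c (d(j := d j - 1)) else 0)"
  proof (cases "1 \<le> d j")
    case True
    then show ?thesis by (simp add: bx_filter[where d=d, OF j True] fC_def sum_distrib_left)
  next
    case False
    then have "{t \<in> bx s d. t j < d j} = {}" by auto
    then show ?thesis using False by simp
  qed
  finally show ?thesis .
qed





lemma vabs_dec:
  assumes j: "j \<in> {1..s}" and tj: "1 \<le> t j"
  shows "vabs s (t(j := t j - 1)) = vabs s t - 1" "vabs s t \<ge> 1"
proof -
  have a: "vabs s t = t j + (\<Sum>i\<in>{1..s}-{j}. t i)" unfolding vabs_def by (rule sum_split[OF j])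
  have b: "vabs s (t(j := t j - 1)) = (t j - 1) + (\<Sum>i\<in>{1..s}-{j}. t i)"
    unfolding vabs_def by (subst sum_split[OF j]) (auto intro!: sum.cong)
  show "vabs s (t(j := t j - 1)) = vabs s t - 1" "vabs s t \<ge> 1" using a b tj by auto
qed

lemma Xp_B:
  assumes j: "j \<in> {1..s}" and tj: "1 \<le> t j"
  shows "Xp s p c (d(j := d j - 1)) (t(j := t j - 1)) = real (t j) * Xp s p c d t"
proof -
  let ?R = "\<Prod>i\<in>{1..s}-{j}. real (c i choose (d i - t i)) * (1 / p i) ^ (d i - t i) / fact (t i)"
  have 1: "Xp s p c (d(j := d j - 1)) (t(j := t j - 1)) = real (c j choose (d j - 1 - (t j - 1))) * (1 / p j) ^ (d j - 1 - (t j - 1)) / fact (t j - 1) * ?R"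
    unfolding Xp_def
    apply (subst prod_split[OF j])
    apply (rule arg_cong2[where f="(*)"])
     apply simp
    apply (rule prod.cong)
     apply auto
    done
  have 2: "Xp s p c d t = real (c j choose (d j - t j)) * (1 / p j) ^ (d j - t j) / fact (t j) * ?R"
    unfolding Xp_def by (subst prod_split[OF j]) simp
  have e: "d j - 1 - (t j - 1) = d j - t j" using tj by simp
  have f: "fact (t j) = real (t j) * (fact (t j - 1) :: real)"
    using tj by (intro fact_reduce) simp
  have tj0: "real (t j) \<noteq> 0" using tj by simp
  show ?thesis unfolding 1 2 e f using tj0 by (simp add: field_simps)
qed

lemma Xp_c_high: "Xp s p (c(s+1 := x)) d t = Xp s p c d t"
  unfolding Xp_def by (rule prod.cong) auto

lemma gt_B:
  shows "gt s p (c(s+1 := c (s+1) + 1)) d t = gt s p c d t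
     - (1 / p (s+1)) * (\<Sum>j=1..s. if 1 \<le> t j then gt s p c (d(j := d j - 1)) (t(j := t j - 1)) else 0)"
proof -
  define T where "T = vabs s t"
  define X where "X = Xp s p c d t"
  define C where "C = c (s+1)"
  define q where "q = 1 / p (s+1)"
  show ?thesis
  proof (cases T)
    case 0
    have "(\<Sum>j=1..s. if 1 \<le> t j then gt s p c (d(j := d j - 1)) (t(j := t j - 1)) else 0) = 0"
    proof (rule sum.neutral, rule ballI)
      fix j assume j: "j \<in> {1..s}"
      have "\<not> 1 \<le> t j" using vabs_dec(2)[OF j, of t] 0 T_def by auto
      thus "(if 1 \<le> t j then gt s p c (d(j := d j - 1)) (t(j := t j - 1)) else 0) = 0" by simp
    qed
    then show ?thesis unfolding gt_def Xp_c_high using 0 T_def by (simp add: ff_0)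
  next
    case (Suc T')
    have "(\<Sum>j=1..s. if 1 \<le> t j then gt s p c (d(j := d j - 1)) (t(j := t j - 1)) else 0)
        = (\<Sum>j=1..s. (-1) ^ T' * q ^ T' * ff C T' * X * real (t j))"
    proof (rule sum.cong[OF refl])
      fix j assume j: "j \<in> {1..s}"
      show "(if 1 \<le> t j then gt s p c (d(j := d j - 1)) (t(j := t j - 1)) else 0) = (-1) ^ T' * q ^ T' * ff C T' * X * real (t j)"
      proof (cases "1 \<le> t j")
        case True
        then show ?thesis unfolding gt_def Xp_B[where t=t, OF j True] vabs_dec(1)[where t=t, OF j True]
          using Suc T_def X_def C_def q_def by simp
      next
        case False
        then show ?thesis by simp
      qed
    qed
    also have "\<dots> = (-1) ^ T' * q ^ T' * ff C T' * X * real T"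
      unfolding T_def vabs_def by (simp add: sum_distrib_left)
    finally have S: "(\<Sum>j=1..s. if 1 \<le> t j then gt s p c (d(j := d j - 1)) (t(j := t j - 1)) else 0) =
       (-1) ^ T' * q ^ T' * ff C T' * X * real T" .
    have "gt s p (c(s+1 := c (s+1) + 1)) d t = (-1) ^ T * q ^ T * ff (Suc C) T * X"
      unfolding gt_def Xp_c_high T_def X_def C_def q_def by simp
    also have "\<dots> = (-1) ^ T * q ^ T * ff C T * X + (-1) ^ T * q ^ T * (real T * ff C T') * X"
      unfolding Suc ff_Suc by (simp add: algebra_simps)
    also have "(-1) ^ T * q ^ T * ff C T * X = gt s p c d t"
      unfolding gt_def T_def X_def C_def q_def by simp
    also have "(-1) ^ T * q ^ T * (real T * ff C T') * X = - q * ((-1) ^ T' * q ^ T' * ff C T' * X * real T)"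
      unfolding Suc by simp
    finally have F: "gt s p (c(s+1 := c (s+1) + 1)) d t = gt s p c d t + - q * ((-1) ^ T' * q ^ T' * ff C T' * X * real T)" .
    show ?thesis by (subst F, unfold S) (simp add: q_def)
  qed
qed

lemma reindex_dec:
  assumes j: "j \<in> {1..s}" and dj: "1 \<le> d j"
  shows "(\<Sum>t\<in>{t\<in>bx s d. 1 \<le> t j}. G (t(j := t j - 1))) = (\<Sum>u\<in>bx s (d(j := d j - 1)). G u)"
proof (rule sum.reindex_bij_witness[where i="\<lambda>u. u(j := u j + 1)" and j="\<lambda>t. t(j := t j - 1)"])
  fix t assume t: "t \<in> {t\<in>bx s d. 1 \<le> t j}"
  show "t(j := t j - 1, j := (t(j := t j - 1)) j + 1) = t" using t by auto
  have tv: "t \<in> Vec s" "\<forall>i\<in>{1..s}. t i \<le> d i" using t by (auto simp: bx_def vle_def)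
  have "\<forall>i\<in>{1..s}. (t(j := t j - 1)) i \<le> (d(j := d j - 1)) i"
  proof
    fix i assume i: "i \<in> {1..s}"
    have "t i \<le> d i" using tv i by blast
    thus "(t(j := t j - 1)) i \<le> (d(j := d j - 1)) i" by (cases "i = j") auto
  qed
  thus "t(j := t j - 1) \<in> bx s (d(j := d j - 1))" using Vec_upd[OF tv(1) j] by (simp add: bx_def vle_def)
  show "G (t(j := t j - 1)) = G (t(j := t j - 1))" ..
next
  fix u assume u: "u \<in> bx s (d(j := d j - 1))"
  show "u(j := u j + 1, j := (u(j := u j + 1)) j - 1) = u" by auto
  have uv: "u \<in> Vec s" "\<forall>i\<in>{1..s}. u i \<le> (d(j := d j - 1)) i" using u by (auto simp: bx_def vle_def)
  have "\<forall>i\<in>{1..s}. (u(j := u j + 1)) i \<le> d i"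
  proof
    fix i assume i: "i \<in> {1..s}"
    have "u i \<le> (d(j := d j - 1)) i" using uv i by blast
    thus "(u(j := u j + 1)) i \<le> d i" using dj by (cases "i = j") auto
  qed
  thus "u(j := u j + 1) \<in> {t\<in>bx s d. 1 \<le> t j}" using Vec_upd[OF uv(1) j] by (simp add: bx_def vle_def)
qed

lemma sum_dec:
  assumes j: "j \<in> {1..s}"
  shows "(\<Sum>t\<in>bx s d. if 1 \<le> t j then G (t(j := t j - 1)) else 0)
     = (if 1 \<le> d j then (\<Sum>u\<in>bx s (d(j := d j - 1)). G u) else 0)"
proof -
  have "(\<Sum>t\<in>bx s d. if 1 \<le> t j then G (t(j := t j - 1)) else 0) = (\<Sum>t\<in>{t\<in>bx s d. 1 \<le> t j}. G (t(j := t j - 1)))"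
    by (rule sum.inter_filter[symmetric, OF finite_bx])
  also have "\<dots> = (if 1 \<le> d j then (\<Sum>u\<in>bx s (d(j := d j - 1)). G u) else 0)"
  proof (cases "1 \<le> d j")
    case True
    then show ?thesis using reindex_dec[where d=d, OF j True] by simp
  next
    case False
    have "{t\<in>bx s d. 1 \<le> t j} = {}" using False bx_le[OF _ j, of _ d] by fastforce
    then show ?thesis using False by (simp only: if_False sum.empty)
  qed
  finally show ?thesis .
qed

lemma fC_B:
  shows "fC s p (c(s+1 := c (s+1) + 1)) d = fC s p c d
     - (1 / p (s+1)) * (\<Sum>j=1..s. if 1 \<le> d j then fC s p c (d(j := d j - 1)) else 0)"
proof -
  have "fC s p (c(s+1 := c (s+1) + 1)) d = fC s p c d
     - (1 / p (s+1)) * (\<Sum>t\<in>bx s d. \<Sum>j=1..s. if 1 \<le> t j then gt s p c (d(j := d j - 1)) (t(j := t j - 1)) else 0)"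
    unfolding fC_def gt_B sum_subtractf sum_distrib_left ..
  also have "(\<Sum>t\<in>bx s d. \<Sum>j=1..s. if 1 \<le> t j then gt s p c (d(j := d j - 1)) (t(j := t j - 1)) else 0)
     = (\<Sum>j=1..s. \<Sum>t\<in>bx s d. if 1 \<le> t j then gt s p c (d(j := d j - 1)) (t(j := t j - 1)) else 0)"
    by (rule sum.swap)
  also have "\<dots> = (\<Sum>j=1..s. if 1 \<le> d j then fC s p c (d(j := d j - 1)) else 0)"
    unfolding fC_def by (rule sum.cong[OF refl]) (rule sum_dec, simp)
  finally show ?thesis .
qed




definition PF :: "nat \<Rightarrow> mindex \<Rightarrow> mindex \<Rightarrow> real" where
  "PF s n m = (\<Prod>i=1..s. fact (n i) / fact (m i))"

lemma PF_dec:
  assumes j: "j \<in> {1..s}" and nj: "1 \<le> n j"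
  shows "real (n j) * PF s (n(j := n j - 1)) m = PF s n m"
proof -
  let ?R = "\<Prod>i\<in>{1..s}-{j}. fact (n i) / fact (m i) :: real"
  have 1: "PF s (n(j := n j - 1)) m = fact (n j - 1) / fact (m j) * ?R"
    unfolding PF_def
    apply (subst prod_split[OF j])
    apply (rule arg_cong2[where f="(*)"])
     apply simp
    apply (rule prod.cong)
     apply auto
    done
  have 2: "PF s n m = fact (n j) / fact (m j) * ?R"
    unfolding PF_def by (subst prod_split[OF j]) simp
  have f: "fact (n j) = real (n j) * (fact (n j - 1) :: real)"
    using nj by (intro fact_reduce) simp
  show ?thesis unfolding 1 2 f by simp
qed

lemma vle_dec:
  assumes j: "j \<in> {1..s}" and nj: "1 \<le> n j"
  shows "vle s m (n(j := n j - 1)) \<longleftrightarrow> vle s m n \<and> 1 \<le> n j - m j"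
proof
  assume a: "vle s m (n(j := n j - 1))"
  have b: "m i \<le> (n(j := n j - 1)) i" if "i \<in> {1..s}" for i using a that by (auto simp: vle_def)
  have "m j \<le> n j - 1" using b[OF j] by simp
  hence c: "1 \<le> n j - m j" using nj by simp
  have "m i \<le> n i" if "i \<in> {1..s}" for i using b[OF that] by (cases "i = j") auto
  thus "vle s m n \<and> 1 \<le> n j - m j" using c by (simp add: vle_def)
next
  assume a: "vle s m n \<and> 1 \<le> n j - m j"
  have "m i \<le> (n(j := n j - 1)) i" if "i \<in> {1..s}" for i
    using a that by (cases "i = j") (auto simp: vle_def)
  thus "vle s m (n(j := n j - 1))" by (simp add: vle_def)
qed

lemma d_dec: fixes n m :: mindex shows "(\<lambda>i. (n(j := n j - 1)) i - m i) = (\<lambda>i. n i - m i)(j := n j - m j - 1)"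
proof (rule ext)
  fix i show "(n(j := n j - 1)) i - m i = ((\<lambda>i. n i - m i)(j := n j - m j - 1)) i"
    by (cases "i = j") (simp_all add: diff_diff_left add.commute)
qed

lemma vle_diff_Vec: fixes n m :: mindex shows "n \<in> Vec s \<Longrightarrow> (\<lambda>i. n i - m i) \<in> Vec s"
  by (auto simp: Vec_def)

lemma fC_zero:
  assumes d: "d \<in> Vec s"
  shows "fC s p (\<lambda>_. 0) d = (if \<forall>i\<in>{1..s}. d i = 0 then 1 else 0)"
proof -
  let ?z = "(\<lambda>_. 0) :: mindex"
  have z: "?z \<in> bx s d" by (auto simp: bx_def Vec_def vle_def)
  have other: "gt s p (\<lambda>_. 0) d t = 0" if t: "t \<in> bx s d - {?z}" for t
  proof -
    have tv: "t \<in> Vec s" using t by (auto simp: bx_def)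
    have "\<exists>i\<in>{1..s}. t i \<noteq> 0"
    proof (rule ccontr)
      assume "\<not> ?thesis"
      hence a: "\<forall>i\<in>{1..s}. t i = 0" by blast
      have "t x = 0" for x
      proof (cases "x \<in> {1..s}")
        case True thus ?thesis using a by blast
      next
        case False thus ?thesis using tv by (simp add: Vec_def)
      qed
      hence "t = ?z" by (intro ext)
      thus False using t by auto
    qed
    then obtain i where i: "i \<in> {1..s}" "t i \<noteq> 0" by blast
    have "vabs s t \<ge> 1" using vabs_dec(2)[OF i(1), of t] i by simp
    hence "ff 0 (vabs s t) = 0" by (simp add: ff_def)
    thus ?thesis by (simp add: gt_def)
  qed
  have "fC s p (\<lambda>_. 0) d = gt s p (\<lambda>_. 0) d ?z"
    unfolding fC_def by (subst sum.remove[OF finite_bx z]) (simp add: other)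
  also have "\<dots> = (\<Prod>i=1..s. real (0 choose d i) * (1 / p i) ^ d i)"
    by (simp add: gt_def vabs_def ff_0 Xp_def)
  also have "\<dots> = (if \<forall>i\<in>{1..s}. d i = 0 then 1 else 0)"
  proof (cases "\<forall>i\<in>{1..s}. d i = 0")
    case True
    then show ?thesis by (simp del: One_nat_def)
  next
    case False
    then obtain i where i: "i \<in> {1..s}" "d i \<noteq> 0" by blast
    have "real (0 choose d i) * (1 / p i) ^ d i = 0" using i(2) by simp
    hence "(\<Prod>i=1..s. real (0 choose d i) * (1 / p i) ^ d i) = 0"
      using i by (intro prod_zero) blast+
    then show ?thesis using False by simp
  qed
  finally show ?thesis .
qed


definition RHS :: "nat \<Rightarrow> (nat \<Rightarrow> real) \<Rightarrow> (nat \<Rightarrow> nat) \<Rightarrow> mindex \<Rightarrow> mindex \<Rightarrow> real" where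
  "RHS s p c n m = (if vle s m n then PF s n m * fC s p c (\<lambda>i. n i - m i) else 0)"

lemma RHS_dec:
  assumes j: "j \<in> {1..s}" and nj: "1 \<le> n j"
  shows "real (n j) * RHS s p c (n(j := n j - 1)) m =
    (if vle s m n \<and> 1 \<le> n j - m j then PF s n m * fC s p c ((\<lambda>i. n i - m i)(j := n j - m j - 1)) else 0)"
  unfolding RHS_def vle_dec[where n=n, OF j nj] d_dec using PF_dec[where n=n, OF j nj, of m] by auto

lemma Am_base:
  assumes n: "n \<in> Vec s" and m: "m \<in> Vec s"
  shows "Am s p \<omega> 0 n m = RHS s p (cnt \<omega> 0) n m"
proof -
  have c0: "cnt \<omega> 0 = (\<lambda>_. 0)" by (rule ext) (simp add: cnt_0)
  show ?thesis
  proof (cases "vle s m n")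
    case True
    have eq: "(\<forall>i\<in>{1..s}. n i - m i = 0) \<longleftrightarrow> n = m"
    proof
      assume a: "\<forall>i\<in>{1..s}. n i - m i = 0"
      show "n = m"
      proof (rule ext)
        fix x show "n x = m x"
        proof (cases "x \<in> {1..s}")
          case True thus ?thesis using a \<open>vle s m n\<close> by (force simp: vle_def)
        next
          case False thus ?thesis using n m by (simp add: Vec_def)
        qed
      qed
    qed simp
    have PF1: "PF s n n = 1" by (simp add: PF_def)
    show ?thesis unfolding RHS_def c0 fC_zero[OF vle_diff_Vec[OF n]] eq
      using True PF1 by (auto simp: Am_def Idm_def)
  next
    case False
    hence "n \<noteq> m" by (auto simp: vle_def)
    thus ?thesis using False by (simp add: Am_def Idm_def RHS_def)
  qed
qed

lemma Am_formula:
  assumes vp: "valid_p s p"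
  shows "\<forall>\<omega>. valid_omega s \<omega> \<longrightarrow> (\<forall>n\<in>Vec s. \<forall>m\<in>Vec s. Am s p \<omega> k n m = RHS s p (cnt \<omega> k) n m)"
proof (induction k)
  case 0
  then show ?case using Am_base by blast
next
  case (Suc k)
  show ?case
  proof (intro allI impI ballI)
    fix \<omega> n m assume vo: "valid_omega s \<omega>" and n: "n \<in> Vec s" and m: "m \<in> Vec s"
    let ?c = "cnt (shift \<omega>) k"
    have IH: "\<And>x. x \<in> Vec s \<Longrightarrow> Am s p (shift \<omega>) k x m = RHS s p ?c x m"
      using Suc.IH valid_shift[OF vo] m by blast
    let ?d = "\<lambda>i. n i - m i"
    have w1: "\<omega> 1 \<in> {1..s+1}" using vo by (simp add: valid_omega_def)
    show "Am s p \<omega> (Suc k) n m = RHS s p (cnt \<omega> (Suc k)) n m"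
    proof (cases "\<omega> 1 = s + 1")
      case False
      define i where "i = \<omega> 1"
      have i: "i \<in> {1..s}" using w1 False i_def by auto
      have "Am s p \<omega> (Suc k) n m = RHS s p ?c n m
        + (if 1 \<le> n i then real (n i) / p i * RHS s p ?c (n(i := n i - 1)) m else 0)"
        unfolding Am_Suc_low[OF vp vo n i[unfolded i_def]] i_def[symmetric]
        using IH[OF n] IH[OF Vec_upd[OF n i]] by simp
      also have "\<dots> = RHS s p (?c(i := ?c i + 1)) n m"
      proof (cases "vle s m n")
        case True
        have "(if 1 \<le> n i then real (n i) / p i * RHS s p ?c (n(i := n i - 1)) m else 0)
           = PF s n m * (if 1 \<le> ?d i then 1 / p i * fC s p ?c (?d(i := ?d i - 1)) else 0)"
        proof (cases "1 \<le> n i")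
          case True
          have "real (n i) / p i * RHS s p ?c (n(i := n i - 1)) m = (real (n i) * RHS s p ?c (n(i := n i - 1)) m) / p i"
            by simp
          then show ?thesis unfolding RHS_dec[where n=n, OF i True] using True \<open>vle s m n\<close> by auto
        next
          case False
          then show ?thesis by simp
        qed
        moreover have "RHS s p (?c(i := ?c i + 1)) n m = PF s n m * (fC s p ?c ?d + (if 1 \<le> ?d i then 1 / p i * fC s p ?c (?d(i := ?d i - 1)) else 0))"
          unfolding RHS_def fC_A[OF i] using True by (simp only: if_True)
        moreover have "RHS s p ?c n m = PF s n m * fC s p ?c ?d" unfolding RHS_def using True by (simp only: if_True)
        ultimately show ?thesis by (simp only: distrib_left)
      next
        case False
        have "\<not> vle s m (n(i := n i - 1))" if "1 \<le> n i" using False vle_dec[where n=n, OF i that] by simp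
        then show ?thesis using False by (simp add: RHS_def)
      qed
      also have "?c(i := ?c i + 1) = cnt \<omega> (Suc k)" unfolding cnt_Suc' i_def ..
      finally show ?thesis .
    next
      case True
      have "Am s p \<omega> (Suc k) n m = RHS s p ?c n m
        - (1 / p (s+1)) * (\<Sum>j=1..s. if 1 \<le> n j then real (n j) * RHS s p ?c (n(j := n j - 1)) m else 0)"
      proof -
        have "(\<Sum>j=1..s. if 1 \<le> n j then real (n j) * Am s p (shift \<omega>) k (n(j := n j - 1)) m else 0)
          = (\<Sum>j=1..s. if 1 \<le> n j then real (n j) * RHS s p ?c (n(j := n j - 1)) m else 0)"
          by (rule sum.cong[OF refl]) (simp add: IH[OF Vec_upd[OF n]])
        thus ?thesis unfolding Am_Suc_high[OF vp vo n True] IH[OF n] by simp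
      qed
      also have "\<dots> = RHS s p (?c(s+1 := ?c (s+1) + 1)) n m"
      proof (cases "vle s m n")
        case True
        have "(\<Sum>j=1..s. if 1 \<le> n j then real (n j) * RHS s p ?c (n(j := n j - 1)) m else 0)
           = PF s n m * (\<Sum>j=1..s. if 1 \<le> ?d j then fC s p ?c (?d(j := ?d j - 1)) else 0)"
          unfolding sum_distrib_left
        proof (rule sum.cong[OF refl])
          fix j assume j: "j \<in> {1..s}"
          show "(if 1 \<le> n j then real (n j) * RHS s p ?c (n(j := n j - 1)) m else 0)
            = PF s n m * (if 1 \<le> ?d j then fC s p ?c (?d(j := ?d j - 1)) else 0)"
          proof (cases "1 \<le> n j")
            case True
            then show ?thesis unfolding RHS_dec[where n=n, OF j True] using \<open>vle s m n\<close> by auto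
          next
            case False
            then show ?thesis by simp
          qed
        qed
        moreover have "RHS s p (?c(s+1 := ?c (s+1) + 1)) n m = PF s n m * (fC s p ?c ?d - 1 / p (s+1) * (\<Sum>j=1..s. if 1 \<le> ?d j then fC s p ?c (?d(j := ?d j - 1)) else 0))"
          unfolding RHS_def fC_B using True by (simp only: if_True)
        moreover have "RHS s p ?c n m = PF s n m * fC s p ?c ?d" unfolding RHS_def using True by (simp only: if_True)
        ultimately show ?thesis by (simp add: right_diff_distrib)
      next
        case False
        have "\<not> vle s m (n(j := n j - 1))" if "1 \<le> n j" "j \<in> {1..s}" for j
          using False vle_dec[where n=n, OF that(2,1)] by simp
        hence "(\<Sum>j=1..s. if 1 \<le> n j then real (n j) * RHS s p ?c (n(j := n j - 1)) m else 0) = 0"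
          by (intro sum.neutral) (simp add: RHS_def)
        then show ?thesis using False by (simp add: RHS_def)
      qed
      also have "?c(s+1 := ?c (s+1) + 1) = cnt \<omega> (Suc k)" unfolding cnt_Suc' True ..
      finally show ?thesis .
    qed
  qed
qed




lemma Tset_sub:
  assumes "vle s r q"
  shows "Tset s \<omega> k q r \<subseteq> bx s (\<lambda>i. q i - r i)"
proof
  fix t assume t: "t \<in> Tset s \<omega> k q r"
  have "t i \<le> q i - r i" if i: "i \<in> {1..s}" for i
  proof -
    have "int (t i) \<le> int (q i) - int (r i)" using t i by (simp add: Tset_def)
    moreover have "r i \<le> q i" using assms i by (simp add: vle_def)
    ultimately show ?thesis by linarith
  qed
  thus "t \<in> bx s (\<lambda>i. q i - r i)" using t by (auto simp: Tset_def bx_def vle_def)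
qed

lemma gt_zero_out:
  assumes r: "vle s r q" and t: "t \<in> bx s (\<lambda>i. q i - r i) - Tset s \<omega> k q r"
  shows "gt s p (cnt \<omega> k) (\<lambda>i. q i - r i) t = 0"
proof -
  let ?c = "cnt \<omega> k"
  have tv: "t \<in> Vec s" and tle: "\<forall>i\<in>{1..s}. t i \<le> q i - r i" using t by (auto simp: bx_def vle_def)
  have rq: "\<forall>i\<in>{1..s}. r i \<le> q i" using r by (simp add: vle_def)
  have "\<not> ((\<forall>i\<in>{1..s}. int (q i) - int (r i) - int (?c i) \<le> int (t i) \<and> int (t i) \<le> int (q i) - int (r i))
      \<and> vabs s t \<le> ?c (s + 1))" using t tv by (auto simp: Tset_def)
  moreover have "\<forall>i\<in>{1..s}. int (t i) \<le> int (q i) - int (r i)" using tle rq by force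
  ultimately have "(\<exists>i\<in>{1..s}. q i - r i - t i > ?c i) \<or> vabs s t > ?c (s+1)"
    using rq by force
  thus ?thesis
  proof
    assume "\<exists>i\<in>{1..s}. q i - r i - t i > ?c i"
    then obtain i where i: "i \<in> {1..s}" "q i - r i - t i > ?c i" by blast
    have "Xp s p ?c (\<lambda>i. q i - r i) t = 0"
      unfolding Xp_def using i by (intro prod_zero) (auto intro!: bexI[of _ i] simp: binomial_eq_0)
    thus ?thesis by (simp add: gt_def)
  next
    assume "vabs s t > ?c (s+1)"
    hence "ff (?c (s+1)) (vabs s t) = 0" by (simp add: ff_def binomial_eq_0)
    thus ?thesis by (simp add: gt_def)
  qed
qed

lemma term_eq:
  assumes vp: "valid_p s p" and r: "vle s r q" and t: "t \<in> Tset s \<omega> k q r"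
  shows "PF s q r * gt s p (cnt \<omega> k) (\<lambda>i. q i - r i) t =
       (-1) ^ vabs s t * (1 / p (s + 1)) ^ vabs s t
       * fact (cnt \<omega> k (s + 1)) / fact (cnt \<omega> k (s + 1) - vabs s t)
       * (\<Prod>i=1..s.
           fact (cnt \<omega> k i) * fact (q i) /
           (fact (cnt \<omega> k i - (q i - r i - t i)) * fact (q i - r i - t i) * fact (t i)
             * fact (r i) * p i ^ (q i - r i - t i)))"
proof -
  let ?c = "cnt \<omega> k"
  have T: "vabs s t \<le> ?c (s+1)" using t by (simp add: Tset_def)
  have rq: "\<forall>i\<in>{1..s}. r i \<le> q i" using r by (simp add: vle_def)
  have a: "q i - r i - t i \<le> ?c i" if "i \<in> {1..s}" for i
  proof -
    have "int (q i) - int (r i) - int (?c i) \<le> int (t i)" using t that by (simp add: Tset_def)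
    moreover have "r i \<le> q i" using rq that by blast
    ultimately show ?thesis by linarith
  qed
  have ff: "ff (?c (s+1)) (vabs s t) = fact (?c (s + 1)) / fact (?c (s + 1) - vabs s t)"
    unfolding ff_def binomial_fact[OF T] by simp
  have pi: "p i \<noteq> 0" if "i \<in> {1..s}" for i using p_pos[OF vp, of i] that by auto
  have "PF s q r * Xp s p ?c (\<lambda>i. q i - r i) t =
      (\<Prod>i=1..s. fact (cnt \<omega> k i) * fact (q i) /
           (fact (cnt \<omega> k i - (q i - r i - t i)) * fact (q i - r i - t i) * fact (t i)
             * fact (r i) * p i ^ (q i - r i - t i)))"
    unfolding PF_def Xp_def prod.distrib[symmetric]
  proof (rule prod.cong[OF refl])
    fix i assume i: "i \<in> {1..s}"
    show "fact (q i) / fact (r i) * (real (?c i choose (q i - r i - t i)) * (1 / p i) ^ (q i - r i - t i) / fact (t i)) =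
       fact (cnt \<omega> k i) * fact (q i) /
           (fact (cnt \<omega> k i - (q i - r i - t i)) * fact (q i - r i - t i) * fact (t i)
             * fact (r i) * p i ^ (q i - r i - t i))"
      unfolding binomial_fact[OF a[OF i]] using pi[OF i] by (simp add: field_simps)
  qed
  thus ?thesis unfolding gt_def ff by (simp add: algebra_simps)
qed

lemma part1:
  assumes vp: "valid_p s p" and vo: "valid_omega s \<omega>" and q: "q \<in> Vec s" and r: "r \<in> Vec s"
    and rq: "vle s r q"
  shows "Am s p \<omega> k q r = Aformula s p \<omega> k q r"
proof -
  have "Am s p \<omega> k q r = PF s q r * fC s p (cnt \<omega> k) (\<lambda>i. q i - r i)"
    using Am_formula[OF vp] vo q r rq by (simp add: RHS_def)
  also have "\<dots> = (\<Sum>t\<in>bx s (\<lambda>i. q i - r i). PF s q r * gt s p (cnt \<omega> k) (\<lambda>i. q i - r i) t)"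
    by (simp add: fC_def sum_distrib_left)
  also have "\<dots> = (\<Sum>t\<in>Tset s \<omega> k q r. PF s q r * gt s p (cnt \<omega> k) (\<lambda>i. q i - r i) t)"
    by (rule sum.mono_neutral_right[OF finite_bx Tset_sub[OF rq]]) (simp add: gt_zero_out[OF rq])
  also have "\<dots> = Aformula s p \<omega> k q r"
    unfolding Aformula_def by (rule sum.cong[OF refl]) (rule term_eq[OF vp rq])
  finally show ?thesis .
qed


lemma fC_no_high:
  assumes c: "c (s+1) = 0"
  shows "fC s p c d = Xp s p c d (\<lambda>_. 0)"
proof -
  let ?z = "(\<lambda>_. 0) :: mindex"
  have z: "?z \<in> bx s d" by (auto simp: bx_def Vec_def vle_def)
  have other: "gt s p c d t = 0" if t: "t \<in> bx s d - {?z}" for t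
  proof -
    have tv: "t \<in> Vec s" using t by (auto simp: bx_def)
    have "\<exists>i\<in>{1..s}. t i \<noteq> 0"
    proof (rule ccontr)
      assume "\<not> ?thesis"
      hence a: "\<forall>i\<in>{1..s}. t i = 0" by blast
      have "t x = 0" for x
      proof (cases "x \<in> {1..s}")
        case True thus ?thesis using a by blast
      next
        case False thus ?thesis using tv by (simp add: Vec_def)
      qed
      hence "t = ?z" by (intro ext)
      thus False using t by auto
    qed
    then obtain i where i: "i \<in> {1..s}" "t i \<noteq> 0" by blast
    have "vabs s t \<ge> 1" using vabs_dec(2)[OF i(1), of t] i by simp
    hence "ff (c (s+1)) (vabs s t) = 0" using c by (simp add: ff_def)
    thus ?thesis by (simp add: gt_def)
  qed
  have "fC s p c d = gt s p c d ?z"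
    unfolding fC_def by (subst sum.remove[OF finite_bx z]) (simp add: other)
  also have "\<dots> = Xp s p c d ?z"
    by (simp add: gt_def vabs_def ff_0)
  finally show ?thesis .
qed

lemma binom_lower:
  assumes "d \<le> c" "d \<le> (q::nat)"
  shows "real c ^ d / (real q + 1) ^ q \<le> real (c choose d)"
proof -
  have "(real c / real d) ^ d \<le> real c gchoose d"
    by (rule gbinomial_ge_n_over_k_pow_k) (use assms in simp)
  hence 1: "real c ^ d / real d ^ d \<le> real (c choose d)"
    by (simp add: binomial_gbinomial power_divide)
  have 2: "real d ^ d \<le> (real q + 1) ^ q"
  proof -
    have "real d ^ d \<le> (real q + 1) ^ d" by (rule power_mono) (use assms in auto)
    also have "\<dots> \<le> (real q + 1) ^ q" by (rule power_increasing) (use assms in auto)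
    finally show ?thesis .
  qed
  have 3: "real c ^ d / (real q + 1) ^ q \<le> real c ^ d / real d ^ d"
  proof (cases "d = 0")
    case True thus ?thesis by simp
  next
    case False
    thus ?thesis by (intro divide_left_mono 2) auto
  qed
  show ?thesis using 1 3 by linarith
qed

lemma part3:
  assumes vp: "valid_p s p" and vo: "valid_omega s \<omega>" and q: "q \<in> Vec s" and r: "r \<in> Vec s"
    and rq: "vle s r q" and nh: "\<forall>j\<in>{1..k}. \<omega> j \<noteq> s + 1"
    and big: "\<forall>i\<in>{1..s}. cnt \<omega> k i > q i - r i"
  shows "Am s p \<omega> k q r \<ge> (\<Prod>i=1..s. 1 / (real (q i) + 1) ^ q i) * (\<Prod>i=1..s. real (cnt \<omega> k i) ^ (q i - r i))"
proof -
  let ?c = "cnt \<omega> k"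
  have c0: "?c (s+1) = 0" using nh by (auto simp: cnt_def)
  have "Am s p \<omega> k q r = PF s q r * fC s p ?c (\<lambda>i. q i - r i)"
    using Am_formula[OF vp] vo q r rq by (simp add: RHS_def)
  also have "\<dots> = (\<Prod>i=1..s. fact (q i) / fact (r i) * (real (?c i choose (q i - r i)) * (1 / p i) ^ (q i - r i)))"
    unfolding fC_no_high[where c="cnt \<omega> k" and s=s, OF c0] PF_def Xp_def prod.distrib[symmetric] by simp
  finally have A: "Am s p \<omega> k q r = \<dots>" .
  have "(\<Prod>i=1..s. 1 / (real (q i) + 1) ^ q i) * (\<Prod>i=1..s. real (?c i) ^ (q i - r i))
     = (\<Prod>i=1..s. real (?c i) ^ (q i - r i) / (real (q i) + 1) ^ q i)"
    unfolding prod.distrib[symmetric] by simp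
  also have "\<dots> \<le> (\<Prod>i=1..s. fact (q i) / fact (r i) * (real (?c i choose (q i - r i)) * (1 / p i) ^ (q i - r i)))"
  proof (rule prod_mono, rule conjI)
    fix i assume i: "i \<in> {1..s}"
    show "0 \<le> real (?c i) ^ (q i - r i) / (real (q i) + 1) ^ q i" by simp
    have rqi: "r i \<le> q i" using rq i by (simp add: vle_def)
    have pi: "0 < p i" "p i < 1" using vp i by (auto simp: valid_p_def)
    have f1: "1 \<le> fact (q i) / (fact (r i) :: real)"
      using fact_mono[OF rqi, where 'a=real] by (simp add: field_simps)
    have f2: "1 \<le> (1 / p i) ^ (q i - r i)"
      using pi by (intro one_le_power) (simp add: field_simps)
    have b: "real (?c i) ^ (q i - r i) / (real (q i) + 1) ^ q i \<le> real (?c i choose (q i - r i))"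
    proof (rule binom_lower)
      show "q i - r i \<le> ?c i" using big i by (meson less_imp_le)
    qed simp
    have "real (?c i choose (q i - r i)) \<le> fact (q i) / fact (r i) * (real (?c i choose (q i - r i)) * (1 / p i) ^ (q i - r i))"
    proof -
      have "real (?c i choose (q i - r i)) \<le> real (?c i choose (q i - r i)) * (1 / p i) ^ (q i - r i)"
        using f2 by (simp add: mult_le_cancel_left1)
      also have "\<dots> \<le> fact (q i) / fact (r i) * (real (?c i choose (q i - r i)) * (1 / p i) ^ (q i - r i))"
        using mult_right_mono[OF f1, of "real (?c i choose (q i - r i)) * (1 / p i) ^ (q i - r i)"] pi by simp
      finally show ?thesis .
    qed
    thus "real (?c i) ^ (q i - r i) / (real (q i) + 1) ^ q i \<le> fact (q i) / fact (r i) * (real (?c i choose (q i - r i)) * (1 / p i) ^ (q i - r i))"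
      using b by linarith
  qed
  finally show ?thesis using A by simp
qed


lemma inv_p_ge1: "valid_p s p \<Longrightarrow> i \<in> {1..s+1} \<Longrightarrow> 1 \<le> 1 / p i"
proof -
  assume vp: "valid_p s p" and i: "i \<in> {1..s+1}"
  have pos: "p i > 0" by (rule p_pos[OF vp i])
  have "p i \<le> 1"
  proof (cases "i = s+1")
    case True
    have "(\<Sum>i=1..s. p i) \<ge> 0" using vp by (intro sum_nonneg) (auto simp: valid_p_def less_imp_le)
    thus ?thesis using vp True by (simp add: valid_p_def)
  next
    case False thus ?thesis using vp i by (auto simp: valid_p_def less_imp_le)
  qed
  thus ?thesis using pos by simp
qed

definition Kp :: "nat \<Rightarrow> (nat \<Rightarrow> real) \<Rightarrow> mindex \<Rightarrow> real" where
  "Kp s p q = (1 / p (s+1)) ^ vabs s q * (\<Prod>i=1..s. (1 / p i) ^ q i)"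

lemma gt_abs_bound:
  assumes vp: "valid_p s p" and t: "t \<in> bx s d" and dq: "vle s d q"
  shows "\<bar>gt s p c d t\<bar> \<le> Kp s p q * ((\<Prod>i=1..s. real (max 1 (c i)) ^ (d i - t i)) * real (max 1 (c (s+1))) ^ vabs s t)"
proof -
  let ?T = "vabs s t"
  let ?C = "c (s+1)"
  have tle: "\<forall>i\<in>{1..s}. t i \<le> d i" using t by (simp add: bx_def vle_def)
  have dle: "\<forall>i\<in>{1..s}. d i \<le> q i" using dq by (simp add: vle_def)
  have Tq: "?T \<le> vabs s q" unfolding vabs_def by (rule sum_mono) (use tle dle in force)
  have P1: "1 \<le> 1 / p (s+1)" by (rule inv_p_ge1[OF vp]) simp
  have e1: "(1 / p (s+1)) ^ ?T \<le> (1 / p (s+1)) ^ vabs s q" by (rule power_increasing[OF Tq P1])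
  have e2: "ff ?C ?T \<le> real (max 1 ?C) ^ ?T"
  proof -
    have "ff ?C ?T \<le> real ?C ^ ?T" unfolding ff_def
      using binomial_fact_pow[of ?C ?T] by (metis of_nat_fact of_nat_le_iff of_nat_mult of_nat_power)
    also have "\<dots> \<le> real (max 1 ?C) ^ ?T" by (rule power_mono) auto
    finally show ?thesis .
  qed
  have ff0: "0 \<le> ff ?C ?T" by (simp add: ff_def)
  have e3: "\<bar>Xp s p c d t\<bar> \<le> (\<Prod>i=1..s. (1 / p i) ^ q i * real (max 1 (c i)) ^ (d i - t i))"
    unfolding Xp_def abs_prod
  proof (rule prod_mono, rule conjI)
    fix i assume i: "i \<in> {1..s}"
    show "0 \<le> \<bar>real (c i choose (d i - t i)) * (1 / p i) ^ (d i - t i) / fact (t i)\<bar>" by simp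
    have pi: "p i > 0" by (rule p_pos[OF vp]) (use i in auto)
    have P: "1 \<le> 1 / p i" by (rule inv_p_ge1[OF vp]) (use i in auto)
    have "\<bar>real (c i choose (d i - t i)) * (1 / p i) ^ (d i - t i) / fact (t i)\<bar>
        = real (c i choose (d i - t i)) * (1 / p i) ^ (d i - t i) / fact (t i)" using pi by simp
    also have "\<dots> \<le> real (c i choose (d i - t i)) * (1 / p i) ^ (d i - t i)"
    proof -
      have f: "(1::real) \<le> fact (t i)" by simp
      have "real (c i choose (d i - t i)) * (1 / p i) ^ (d i - t i) / fact (t i) \<le> real (c i choose (d i - t i)) * (1 / p i) ^ (d i - t i) / 1"
        by (rule divide_left_mono[OF f]) (use pi in auto)
      thus ?thesis by simp
    qed
    also have "\<dots> \<le> real (max 1 (c i)) ^ (d i - t i) * (1 / p i) ^ q i"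
    proof (rule mult_mono)
      have "real (c i choose (d i - t i)) \<le> real (c i) ^ (d i - t i)"
      proof (cases "d i - t i \<le> c i")
        case True thus ?thesis using binomial_le_pow[OF True] by (metis of_nat_le_iff of_nat_power)
      next
        case False thus ?thesis by (simp add: binomial_eq_0)
      qed
      also have "\<dots> \<le> real (max 1 (c i)) ^ (d i - t i)" by (rule power_mono) auto
      finally show "real (c i choose (d i - t i)) \<le> real (max 1 (c i)) ^ (d i - t i)" .
      show "(1 / p i) ^ (d i - t i) \<le> (1 / p i) ^ q i"
        by (rule power_increasing[OF _ P]) (use dle i in force)
    qed (use pi in auto)
    finally show "\<bar>real (c i choose (d i - t i)) * (1 / p i) ^ (d i - t i) / fact (t i)\<bar> \<le> (1 / p i) ^ q i * real (max 1 (c i)) ^ (d i - t i)"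
      by (simp add: mult.commute)
  qed
  have "\<bar>gt s p c d t\<bar> = (1 / p (s+1)) ^ ?T * ff ?C ?T * \<bar>Xp s p c d t\<bar>"
    unfolding gt_def using ff0 p_pos[OF vp, of "s+1"] by (simp add: abs_mult power_abs)
  also have "\<dots> \<le> (1 / p (s+1)) ^ vabs s q * real (max 1 ?C) ^ ?T * (\<Prod>i=1..s. (1 / p i) ^ q i * real (max 1 (c i)) ^ (d i - t i))"
    by (intro mult_mono e1 e2 e3) (use ff0 p_pos[OF vp, of "s+1"] in auto)
  also have "\<dots> = Kp s p q * ((\<Prod>i=1..s. real (max 1 (c i)) ^ (d i - t i)) * real (max 1 (c (s+1))) ^ vabs s t)"
    unfolding Kp_def prod.distrib by (simp add: algebra_simps)
  finally show ?thesis .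
qed


lemma cnt_le: "cnt \<omega> k j \<le> k"
proof -
  have "cnt \<omega> k j \<le> card {1..k}" unfolding cnt_def by (rule card_mono) auto
  thus ?thesis by simp
qed

lemma Kp_nonneg: "valid_p s p \<Longrightarrow> 0 \<le> Kp s p q"
  unfolding Kp_def using p_pos by (auto intro!: mult_nonneg_nonneg prod_nonneg simp: less_imp_le)

lemma sum_bound_gen:
  assumes vp: "valid_p s p" and dq: "vle s d q"
    and M: "\<And>t. t \<in> bx s d \<Longrightarrow> (\<Prod>i=1..s. real (max 1 (c i)) ^ (d i - t i)) * real (max 1 (c (s+1))) ^ vabs s t \<le> B"
  shows "\<bar>fC s p c d\<bar> \<le> real (card (bx s q)) * Kp s p q * B"
proof -
  have "\<bar>fC s p c d\<bar> \<le> (\<Sum>t\<in>bx s d. \<bar>gt s p c d t\<bar>)" unfolding fC_def by (rule sum_abs)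
  also have "\<dots> \<le> real (card (bx s d)) * (Kp s p q * B)"
  proof (rule sum_bounded_above)
    fix t assume t: "t \<in> bx s d"
    show "\<bar>gt s p c d t\<bar> \<le> Kp s p q * B"
      using gt_abs_bound[OF vp t dq, of c] mult_left_mono[OF M[OF t] Kp_nonneg[OF vp, of q]] by linarith
  qed
  also have "\<dots> \<le> real (card (bx s q)) * (Kp s p q * B)"
  proof (rule mult_right_mono)
    have "bx s d \<subseteq> bx s q" using dq by (auto simp: bx_def vle_def intro: order_trans)
    thus "real (card (bx s d)) \<le> real (card (bx s q))" using card_mono[OF finite_bx] by simp
    have "0 \<le> (\<Prod>i=1..s. real (max 1 (c i)) ^ (d i - (\<lambda>_. 0) i)) * real (max 1 (c (s+1))) ^ vabs s (\<lambda>_. 0)"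
      by (intro mult_nonneg_nonneg prod_nonneg) auto
    moreover have "(\<lambda>_. 0) \<in> bx s d" by (auto simp: bx_def Vec_def vle_def)
    ultimately have "0 \<le> B" using M by (meson order_trans)
    thus "0 \<le> Kp s p q * B" using Kp_nonneg[OF vp] by simp
  qed
  finally show ?thesis by (simp add: mult.assoc)
qed

lemma part2:
  assumes vp: "valid_p s p" and q: "q \<in> Vec s"
  shows "\<exists>K::real. K \<ge> 1 \<and> (\<forall>\<omega> k r. valid_omega s \<omega> \<and> k \<ge> 1 \<and> r \<in> Vec s \<and> vle s r q \<longrightarrow>
           \<bar>Am s p \<omega> k q r\<bar> \<le> K * (\<Prod>i=1..s. real (max 1 (cnt \<omega> k i)) ^ (q i - r i))
                                    * real (max 1 (cnt \<omega> k (s + 1))) ^ (vabs s q - vabs s r)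
         \<and> \<bar>Am s p \<omega> k q r\<bar> \<le> K * real k ^ vabs s q)"
proof -
  define K0 where "K0 = (\<Prod>i=1..s. fact (q i)) * real (card (bx s q)) * Kp s p q"
  define K where "K = max 1 K0"
  have K0: "0 \<le> K0" unfolding K0_def using Kp_nonneg[OF vp] by (simp add: prod_nonneg)
  have main: "\<bar>Am s p \<omega> k q r\<bar> \<le> K * (\<Prod>i=1..s. real (max 1 (cnt \<omega> k i)) ^ (q i - r i))
                                    * real (max 1 (cnt \<omega> k (s + 1))) ^ (vabs s q - vabs s r)
         \<and> \<bar>Am s p \<omega> k q r\<bar> \<le> K * real k ^ vabs s q"
    if vo: "valid_omega s \<omega>" and k: "k \<ge> 1" and r: "r \<in> Vec s" and rq: "vle s r q" for \<omega> k r
  proof (rule conjI)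
    let ?c = "cnt \<omega> k"
    let ?d = "\<lambda>i. q i - r i"
    have rqi: "\<forall>i\<in>{1..s}. r i \<le> q i" using rq by (simp add: vle_def)
    have dq: "vle s ?d q" by (simp add: vle_def)
    have Am: "Am s p \<omega> k q r = PF s q r * fC s p ?c ?d"
      using Am_formula[OF vp] vo q r rq by (simp add: RHS_def)
    have PF0: "0 \<le> PF s q r" unfolding PF_def by (simp add: prod_nonneg)
    have PFle: "PF s q r \<le> (\<Prod>i=1..s. fact (q i))" unfolding PF_def
    proof (rule prod_mono, rule conjI)
      fix i assume "i \<in> {1..s}"
      show "0 \<le> fact (q i) / (fact (r i) :: real)" by simp
      have "fact (q i) / fact (r i) \<le> fact (q i) / (1::real)"
        by (rule divide_left_mono) auto
      thus "fact (q i) / fact (r i) \<le> (fact (q i) :: real)" by simp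
    qed
    have gen: "\<bar>Am s p \<omega> k q r\<bar> \<le> K * B"
      if M: "\<And>t. t \<in> bx s ?d \<Longrightarrow> (\<Prod>i=1..s. real (max 1 (?c i)) ^ (?d i - t i)) * real (max 1 (?c (s+1))) ^ vabs s t \<le> B"
      for B
    proof -
      have F: "\<bar>fC s p ?c ?d\<bar> \<le> real (card (bx s q)) * Kp s p q * B" by (rule sum_bound_gen[OF vp dq M])
      have B0: "0 \<le> B"
      proof -
        have "0 \<le> (\<Prod>i=1..s. real (max 1 (?c i)) ^ (?d i - (\<lambda>_. 0) i)) * real (max 1 (?c (s+1))) ^ vabs s (\<lambda>_. 0)"
          by (intro mult_nonneg_nonneg prod_nonneg) auto
        moreover have "(\<lambda>_. 0) \<in> bx s ?d" by (auto simp: bx_def Vec_def vle_def)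
        ultimately show ?thesis using M by (meson order_trans)
      qed
      have "\<bar>Am s p \<omega> k q r\<bar> = PF s q r * \<bar>fC s p ?c ?d\<bar>" unfolding Am using PF0 by (simp add: abs_mult)
      also have "\<dots> \<le> (\<Prod>i=1..s. fact (q i)) * (real (card (bx s q)) * Kp s p q * B)"
        by (rule mult_mono[OF PFle F]) (simp_all add: prod_nonneg)
      also have "\<dots> = K0 * B" unfolding K0_def by (simp add: mult.assoc)
      also have "\<dots> \<le> K * B" unfolding K_def by (rule mult_right_mono[OF _ B0]) simp
      finally show ?thesis .
    qed
    have vd: "vabs s ?d = vabs s q - vabs s r"
      unfolding vabs_def by (rule sum_subtractf_nat) (use rqi in blast)
    show "\<bar>Am s p \<omega> k q r\<bar> \<le> K * (\<Prod>i=1..s. real (max 1 (?c i)) ^ (q i - r i)) * real (max 1 (?c (s + 1))) ^ (vabs s q - vabs s r)"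
      unfolding mult.assoc
    proof (rule gen)
      fix t assume t: "t \<in> bx s ?d"
      have tle: "\<forall>i\<in>{1..s}. t i \<le> ?d i" using t by (simp add: bx_def vle_def)
      have Td: "vabs s t \<le> vabs s ?d" unfolding vabs_def by (rule sum_mono) (use tle in blast)
      show "(\<Prod>i=1..s. real (max 1 (?c i)) ^ (?d i - t i)) * real (max 1 (?c (s+1))) ^ vabs s t
         \<le> (\<Prod>i=1..s. real (max 1 (?c i)) ^ (q i - r i)) * real (max 1 (?c (s + 1))) ^ (vabs s q - vabs s r)"
      proof (rule mult_mono)
        show "(\<Prod>i=1..s. real (max 1 (?c i)) ^ (?d i - t i)) \<le> (\<Prod>i=1..s. real (max 1 (?c i)) ^ (q i - r i))"
          by (rule prod_mono) (auto intro!: power_increasing)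
        show "real (max 1 (?c (s+1))) ^ vabs s t \<le> real (max 1 (?c (s + 1))) ^ (vabs s q - vabs s r)"
          unfolding vd[symmetric] by (rule power_increasing[OF Td]) simp
      qed (auto intro!: prod_nonneg)
    qed
    show "\<bar>Am s p \<omega> k q r\<bar> \<le> K * real k ^ vabs s q"
    proof (rule gen)
      fix t assume t: "t \<in> bx s ?d"
      have tle: "\<forall>i\<in>{1..s}. t i \<le> ?d i" using t by (simp add: bx_def vle_def)
      have ck: "real (max 1 (?c j)) \<le> real k" for j using cnt_le[of \<omega> k j] k by simp
      have "(\<Prod>i=1..s. real (max 1 (?c i)) ^ (?d i - t i)) * real (max 1 (?c (s+1))) ^ vabs s t
          \<le> (\<Prod>i=1..s. real k ^ (?d i - t i)) * real k ^ vabs s t"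
        by (intro mult_mono prod_mono conjI power_mono ck) (auto intro!: prod_nonneg)
      also have "\<dots> = real k ^ ((\<Sum>i=1..s. ?d i - t i) + vabs s t)"
        by (simp add: power_sum power_add)
      also have "(\<Sum>i=1..s. ?d i - t i) + vabs s t = vabs s ?d"
      proof -
        have "(\<Sum>i=1..s. ?d i - t i) = vabs s ?d - vabs s t"
          unfolding vabs_def by (rule sum_subtractf_nat) (use tle in blast)
        moreover have "vabs s t \<le> vabs s ?d" unfolding vabs_def by (rule sum_mono) (use tle in blast)
        ultimately show ?thesis by simp
      qed
      also have "real k ^ vabs s ?d \<le> real k ^ vabs s q"
      proof (rule power_increasing)
        show "vabs s ?d \<le> vabs s q" unfolding vabs_def by (rule sum_mono) simp
      qed (use k in simp)
      finally show "(\<Prod>i=1..s. real (max 1 (?c i)) ^ (?d i - t i)) * real (max 1 (?c (s+1))) ^ vabs s t \<le> real k ^ vabs s q" .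
    qed
  qed
  show ?thesis using main by (intro exI[of _ K]) (auto simp: K_def)
qed


theorem mainTheorem17:
  fixes s :: nat
  assumes "s \<ge> 1"
  shows
    "(\<forall>p \<omega> k q r. valid_p s p \<and> valid_omega s \<omega> \<and> k \<ge> 1 \<and>
        q \<in> Vec s \<and> r \<in> Vec s \<and> vle s r q \<longrightarrow>
        Am s p \<omega> k q r = Aformula s p \<omega> k q r)
   \<and> (\<forall>p q. valid_p s p \<and> q \<in> Vec s \<longrightarrow>
        (\<exists>K::real. K \<ge> 1 \<and> (\<forall>\<omega> k r. valid_omega s \<omega> \<and> k \<ge> 1 \<and> r \<in> Vec s \<and> vle s r q \<longrightarrow>
           \<bar>Am s p \<omega> k q r\<bar> \<le> K * (\<Prod>i=1..s. real (max 1 (cnt \<omega> k i)) ^ (q i - r i))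
                                    * real (max 1 (cnt \<omega> k (s + 1))) ^ (vabs s q - vabs s r)
         \<and> \<bar>Am s p \<omega> k q r\<bar> \<le> K * real k ^ vabs s q)))
   \<and> (\<forall>q. q \<in> Vec s \<longrightarrow>
        (\<exists>K'::real. K' > 0 \<and> (\<forall>p \<omega> k r. valid_p s p \<and> valid_omega s \<omega> \<and> k \<ge> 1 \<and>
           r \<in> Vec s \<and> vle s r q \<and> (\<forall>j\<in>{1..k}. \<omega> j \<noteq> s + 1) \<and>
           (\<forall>i\<in>{1..s}. cnt \<omega> k i > q i - r i) \<longrightarrow>
           Am s p \<omega> k q r \<ge> K' * (\<Prod>i=1..s. real (cnt \<omega> k i) ^ (q i - r i)))))"
  proof (intro conjI)
  show "\<forall>p \<omega> k q r. valid_p s p \<and> valid_omega s \<omega> \<and> k \<ge> 1 \<and>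
        q \<in> Vec s \<and> r \<in> Vec s \<and> vle s r q \<longrightarrow>
        Am s p \<omega> k q r = Aformula s p \<omega> k q r"
    using part1 by blast
  show "\<forall>p q. valid_p s p \<and> q \<in> Vec s \<longrightarrow>
        (\<exists>K::real. K \<ge> 1 \<and> (\<forall>\<omega> k r. valid_omega s \<omega> \<and> k \<ge> 1 \<and> r \<in> Vec s \<and> vle s r q \<longrightarrow>
           \<bar>Am s p \<omega> k q r\<bar> \<le> K * (\<Prod>i=1..s. real (max 1 (cnt \<omega> k i)) ^ (q i - r i))
                                    * real (max 1 (cnt \<omega> k (s + 1))) ^ (vabs s q - vabs s r)
         \<and> \<bar>Am s p \<omega> k q r\<bar> \<le> K * real k ^ vabs s q))"
    using part2 by blast
  show "\<forall>q. q \<in> Vec s \<longrightarrow>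
        (\<exists>K'::real. K' > 0 \<and> (\<forall>p \<omega> k r. valid_p s p \<and> valid_omega s \<omega> \<and> k \<ge> 1 \<and>
           r \<in> Vec s \<and> vle s r q \<and> (\<forall>j\<in>{1..k}. \<omega> j \<noteq> s + 1) \<and>
           (\<forall>i\<in>{1..s}. cnt \<omega> k i > q i - r i) \<longrightarrow>
           Am s p \<omega> k q r \<ge> K' * (\<Prod>i=1..s. real (cnt \<omega> k i) ^ (q i - r i))))"
  proof (intro allI impI)
    fix q :: mindex assume q: "q \<in> Vec s"
    have pos: "(\<Prod>i=1..s. 1 / (real (q i) + 1) ^ q i) > 0" by (rule prod_pos) simp
    show "\<exists>K'::real. K' > 0 \<and> (\<forall>p \<omega> k r. valid_p s p \<and> valid_omega s \<omega> \<and> k \<ge> 1 \<and>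
           r \<in> Vec s \<and> vle s r q \<and> (\<forall>j\<in>{1..k}. \<omega> j \<noteq> s + 1) \<and>
           (\<forall>i\<in>{1..s}. cnt \<omega> k i > q i - r i) \<longrightarrow>
           Am s p \<omega> k q r \<ge> K' * (\<Prod>i=1..s. real (cnt \<omega> k i) ^ (q i - r i)))"
      using pos part3[OF _ _ q] by blast
  qed
qed

end
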